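(* Assume (A1). For every constant $p>0$ there exists $u_0>0$ such that the integral equation \[ g(u)=\frac{\mu}{u^\gamma e^{-\alpha/u}}\int_0^u t^{\gamma-2}e^{-\alpha/t}\Big(p\,\bar F(t)+\int_0^t g(z)\bar F(t-z)\,dz\Big)dt,\qquad 0<u\le u_0, \] has a unique solution $g\in C([0,u_0])$, and this solution satisfies $g(0)=\lambda p/c$.
   Context: $F$ is the distribution function of a positive random variable (claim size), $\bar F=1-F$. Parameters: $\kappa\in(0,1]$, $a\in\mathbb{R}$, $r\ge0$, $\sigma>0$, $c>0$, $\lambda>0$, and $\gamma=\dfrac{2((a-r)\kappa+r)}{\kappa^2\sigma^2}$, $\alpha=\dfrac{2c}{\kappa^2\sigma^2}$, $\mu=\dfrac{2\lambda}{\kappa^2\sigma^2}$. Assumption (A1): $F(0)=0$. The value $g(0)$ of a continuous $g$ on $[0,u_0]$ is its limit as $u\downarrow0$. *)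

theory Defs
  imports "HOL-Probability.Probability"
begin

text \<open>The integral equation of the statement, on (0,u0], for a candidate g.
  Integrals are Henstock-Kurzweil integrals over [0,u] resp. [0,t];
  integrability of the outer integrand is required explicitly.\<close>

definition solves_ie ::
  "(real \<Rightarrow> real) \<Rightarrow> real \<Rightarrow> real \<Rightarrow> real \<Rightarrow> real
   \<Rightarrow> real \<Rightarrow> (real \<Rightarrow> real) \<Rightarrow> bool" where
  "solves_ie F \<gamma> \<alpha> \<mu> p u0 g \<longleftrightarrow>
     (\<forall>u\<in>{0<..u0}.
        (\<lambda>t. t powr (\<gamma> - 2) * exp (- \<alpha> / t) *
              (p * (1 - F t) + integral {0..t} (\<lambda>z. g z * (1 - F (t - z)))))
          integrable_on {0..u} \<and>
        g u = \<mu> / (u powr \<gamma> * exp (- \<alpha> / u)) *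
              integral {0..u} (\<lambda>t. t powr (\<gamma> - 2) * exp (- \<alpha> / t) *
                 (p * (1 - F t) + integral {0..t} (\<lambda>z. g z * (1 - F (t - z))))))"

end

theory Submission
  imports Defs "HOL-Real_Asymp.Real_Asymp"
begin
lemma cont_0b:
  fixes f :: "real \<Rightarrow> real"
  assumes "0 < b" "\<And>x. 0 < x \<Longrightarrow> isCont f x" "(f \<longlongrightarrow> f 0) (at_right 0)"
  shows "continuous_on {0..b} f"
proof -
  have "continuous (at x within {0..b}) f" if x: "x \<in> {0..b}" for x
  proof (cases "x = 0")
    case True
    then show ?thesis using assms(1,3) by (simp add: continuous_within at_within_Icc_at_right)
  next
    case False
    then have "isCont f x" using x assms(2) by auto
    then show ?thesis using continuous_at_imp_continuous_at_within by blast
  qed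
  then show ?thesis using continuous_on_eq_continuous_within by blast
qed

locale ie =
  fixes F :: "real \<Rightarrow> real" and \<gamma> \<alpha> \<mu> :: real
  assumes apos: "\<alpha> > 0" and mupos: "\<mu> > 0"
  and Fmono: "mono F" and F0: "\<And>x. 0 \<le> F x" and F1: "\<And>x. F x \<le> 1"
  and Fright: "(F \<longlongrightarrow> 0) (at_right 0)"
begin

definition w :: "real \<Rightarrow> real" where "w t = t powr (\<gamma> - 2) * exp (- \<alpha> / t)"
definition W :: "real \<Rightarrow> real" where "W t = t powr \<gamma> * exp (- \<alpha> / t)"

lemma w0: "w 0 = 0" by (simp add: w_def)
lemma W0: "W 0 = 0" by (simp add: W_def)
lemma w_nonneg: "0 \<le> w t" by (simp add: w_def)
lemma W_pos: "0 < t \<Longrightarrow> 0 < W t" by (simp add: W_def)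

lemma w_cont: "0 < b \<Longrightarrow> continuous_on {0..b} w"
proof (rule cont_0b)
  show "isCont w x" if "0 < x" for x using that unfolding w_def
    by (auto intro!: continuous_intros)
  have "((\<lambda>t::real. t powr (\<gamma> - 2) * exp (- \<alpha> / t)) \<longlongrightarrow> 0) (at_right 0)"
    using apos by real_asymp
  then show "(w \<longlongrightarrow> w 0) (at_right 0)" by (simp add: w_def[abs_def] w0[unfolded w_def])
qed

lemma W_cont: "0 < b \<Longrightarrow> continuous_on {0..b} W"
proof (rule cont_0b)
  show "isCont W x" if "0 < x" for x using that unfolding W_def
    by (auto intro!: continuous_intros)
  have "((\<lambda>t::real. t powr \<gamma> * exp (- \<alpha> / t)) \<longlongrightarrow> 0) (at_right 0)"
    using apos by real_asymp
  then show "(W \<longlongrightarrow> W 0) (at_right 0)" by (simp add: W_def[abs_def] W0[unfolded W_def])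
qed

lemma W_deriv: assumes "0 < x" shows "(W has_real_derivative w x * (\<alpha> + \<gamma> * x)) (at x)"
proof -
  have "(W has_real_derivative (\<gamma> * x powr (\<gamma> - 1)) * exp (- \<alpha> / x) + x powr \<gamma> * (exp (- \<alpha> / x) * (\<alpha> / x^2))) (at x)"
    unfolding W_def[abs_def] using assms
    by (auto intro!: derivative_eq_intros simp: field_simps power2_eq_square)
  moreover have "(\<gamma> * x powr (\<gamma> - 1)) * exp (- \<alpha> / x) + x powr \<gamma> * (exp (- \<alpha> / x) * (\<alpha> / x^2)) = w x * (\<alpha> + \<gamma> * x)"
  proof -
    have a: "x powr (\<gamma> - 1) = x powr (\<gamma> - 2) * x"
    proof -
      have "x powr ((\<gamma> - 2) + 1) = x powr (\<gamma> - 2) * x powr 1" by (rule powr_add)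
      moreover have "(\<gamma> - 2) + 1 = \<gamma> - 1" by simp
      ultimately show ?thesis using assms by simp
    qed
    have b: "x powr \<gamma> = x powr (\<gamma> - 2) * x^2"
    proof -
      have "x powr ((\<gamma> - 2) + 2) = x powr (\<gamma> - 2) * x powr 2" by (rule powr_add)
      moreover have "(\<gamma> - 2) + 2 = \<gamma>" by simp
      ultimately show ?thesis using assms by (simp add: powr_realpow)
    qed
    show ?thesis unfolding w_def a b using assms by (simp add: field_simps power2_eq_square)
  qed
  ultimately show ?thesis by simp
qed

lemma FTC: assumes "0 \<le> u" shows "((\<lambda>t. w t * (\<alpha> + \<gamma> * t)) has_integral W u) {0..u}"
proof (cases "u = 0")
  case True then show ?thesis using has_integral_refl(2)[of "\<lambda>t. w t * (\<alpha> + \<gamma> * t)" 0] by (simp add: W0)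
next
  case False
  then have u: "0 < u" using assms by simp
  have "((\<lambda>t. w t * (\<alpha> + \<gamma> * t)) has_integral W u - W 0) {0..u}"
    apply (rule fundamental_theorem_of_calculus_interior)
    using u W_cont W_deriv by (auto simp: has_real_derivative_iff_has_vector_derivative[symmetric])
  then show ?thesis by (simp add: W0)
qed

end

lemma borel_lebon: "g \<in> borel_measurable borel \<Longrightarrow> g \<in> borel_measurable (lebesgue_on S)"
  using measurable_compose[OF id_borel_measurable_lebesgue_on] by (simp add: id_def)

context ie begin

lemma w_cont': "0 \<le> u \<Longrightarrow> continuous_on {0..u} w"
  using w_cont[of "max u 1"] by (rule continuous_on_subset) auto

lemma w_mult_int: assumes "0 \<le> u" "continuous_on {0..u} h"
  shows "(\<lambda>t. w t * h t) integrable_on {0..u}"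
  by (rule integrable_continuous_interval) (intro continuous_intros w_cont' assms)

lemma w_int: "0 \<le> u \<Longrightarrow> w integrable_on {0..u}"
  using w_mult_int[of u "\<lambda>_. 1"] by simp

lemma tw_int: "0 \<le> u \<Longrightarrow> (\<lambda>t. t * w t) integrable_on {0..u}"
  using w_mult_int[of u "\<lambda>t. t"] by (simp add: mult.commute continuous_on_id)

lemma W_ident: assumes "0 \<le> u"
  shows "\<alpha> * integral {0..u} w + \<gamma> * integral {0..u} (\<lambda>t. t * w t) = W u"
proof -
  have "integral {0..u} (\<lambda>t. w t * (\<alpha> + \<gamma> * t)) = W u" using FTC[OF assms] by blast
  moreover have "integral {0..u} (\<lambda>t. w t * (\<alpha> + \<gamma> * t)) =
     integral {0..u} (\<lambda>t. \<alpha> * w t + \<gamma> * (t * w t))"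
    by (simp add: algebra_simps)
  moreover have "\<dots> = \<alpha> * integral {0..u} w + \<gamma> * integral {0..u} (\<lambda>t. t * w t)"
    using integral_add[OF integrable_on_mult_right[OF w_int[OF assms]] integrable_on_mult_right[OF tw_int[OF assms]]]
      integral_mult[OF w_int[OF assms], of \<alpha>] integral_mult[OF tw_int[OF assms], of \<gamma>]
    by simp
  ultimately show ?thesis by simp
qed

definition u1 :: real where "u1 = \<alpha> / (2 * (\<bar>\<gamma>\<bar> + 1))"

lemma u1_pos: "0 < u1" unfolding u1_def using apos by simp

lemma half_le: assumes "0 \<le> t" "t \<le> u1" shows "\<alpha> / 2 \<le> \<alpha> + \<gamma> * t"
proof -
  have "\<bar>\<gamma> * t\<bar> \<le> \<bar>\<gamma>\<bar> * u1" using assms by (simp add: abs_mult mult_left_mono)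
  also have "\<dots> \<le> (\<bar>\<gamma>\<bar> + 1) * u1" using u1_pos by (simp add: mult_right_mono)
  also have "\<dots> = \<alpha> / 2" unfolding u1_def by (simp add: field_simps)
  finally show ?thesis by linarith
qed

lemma Jw_le: assumes "0 \<le> u" "u \<le> u1" shows "integral {0..u} w \<le> 2 / \<alpha> * W u"
proof -
  have "integral {0..u} w \<le> integral {0..u} (\<lambda>t. 2 / \<alpha> * (w t * (\<alpha> + \<gamma> * t)))"
  proof (rule integral_le)
    show "w integrable_on {0..u}" using w_int assms by simp
    show "(\<lambda>t. 2 / \<alpha> * (w t * (\<alpha> + \<gamma> * t))) integrable_on {0..u}"
      using FTC[OF assms(1)] by (intro integrable_on_mult_right) blast
    show "w t \<le> 2 / \<alpha> * (w t * (\<alpha> + \<gamma> * t))" if "t \<in> {0..u}" for t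
    proof -
      have "\<alpha> / 2 \<le> \<alpha> + \<gamma> * t" using half_le that assms by auto
      then have "w t * (\<alpha> / 2) \<le> w t * (\<alpha> + \<gamma> * t)" using w_nonneg by (rule mult_left_mono)
      then show ?thesis using apos by (simp add: field_simps)
    qed
  qed
  also have "\<dots> = 2 / \<alpha> * W u" using integral_unique[OF FTC[OF assms(1)]] by (simp add: integral_mult_right)
  finally show ?thesis .
qed

lemma Jt_nonneg: "0 \<le> integral {0..u} (\<lambda>t. t * w t)" if "0 \<le> u"
  by (rule integral_nonneg) (use tw_int that w_nonneg in auto)

lemma Jt_le: assumes "0 \<le> u" shows "integral {0..u} (\<lambda>t. t * w t) \<le> u * integral {0..u} w"
proof -
  have "integral {0..u} (\<lambda>t. t * w t) \<le> integral {0..u} (\<lambda>t. u * w t)"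
    by (rule integral_le) (use tw_int w_int assms w_nonneg in \<open>auto intro: integrable_on_mult_right mult_right_mono\<close>)
  then show ?thesis by (simp add: integral_mult_right)
qed

lemma Jt_le2: assumes "0 \<le> u" "u \<le> u1" shows "integral {0..u} (\<lambda>t. t * w t) \<le> 2 / \<alpha> * u * W u"
proof -
  have "integral {0..u} (\<lambda>t. t * w t) \<le> u * integral {0..u} w" using Jt_le[OF assms(1)] .
  also have "u * integral {0..u} w \<le> u * (2 / \<alpha> * W u)" using Jw_le[OF assms] assms(1) by (rule mult_left_mono)
  also have "\<dots> = 2 / \<alpha> * u * W u" by simp
  finally show ?thesis .
qed

end

context ie begin

definition Ig :: "(real \<Rightarrow> real) \<Rightarrow> real \<Rightarrow> real" where
  "Ig f t = integral {0..t} (\<lambda>z. f z * (1 - F (t - z)))"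

lemma F_borel: "F \<in> borel_measurable borel"
  using Fmono by (rule borel_measurable_mono)

lemma Fb_borel: "(\<lambda>z. 1 - F (t - z)) \<in> borel_measurable borel"
  using F_borel by measurable

lemma Ig_int: assumes "continuous_on {0..t} f" "\<forall>z\<in>{0..t}. \<bar>f z\<bar> \<le> B"
  shows "(\<lambda>z. f z * (1 - F (t - z))) integrable_on {0..t}"
proof (rule measurable_bounded_by_integrable_imp_integrable_real)
  show "(\<lambda>z. f z * (1 - F (t - z))) \<in> borel_measurable (lebesgue_on {0..t})"
    using continuous_imp_measurable_on_sets_lebesgue[OF assms(1)] borel_lebon[OF Fb_borel]
    by (intro borel_measurable_times) auto
  show "(\<lambda>_. B) integrable_on {0..t}" by (rule integrable_const_ivl)
  show "\<bar>f z * (1 - F (t - z))\<bar> \<le> B" if "z \<in> {0..t}" for z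
  proof -
    have "\<bar>f z * (1 - F (t - z))\<bar> = \<bar>f z\<bar> * (1 - F (t - z))" using F1 by (simp add: abs_mult)
    also have "\<dots> \<le> \<bar>f z\<bar> * 1" using F0 by (intro mult_left_mono) auto
    moreover have "\<bar>f z\<bar> \<le> B" using assms(2) that by auto
    ultimately show ?thesis by linarith
  qed
qed auto

lemma Ig_bound: assumes "0 \<le> t" "continuous_on {0..t} f" "\<forall>z\<in>{0..t}. \<bar>f z\<bar> \<le> B"
  shows "\<bar>Ig f t\<bar> \<le> B * t"
proof -
  have "norm (Ig f t) \<le> integral {0..t} (\<lambda>_. B)" unfolding Ig_def
  proof (rule integral_norm_bound_integral)
    show "(\<lambda>z. f z * (1 - F (t - z))) integrable_on {0..t}" by (rule Ig_int[OF assms(2,3)])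
    show "(\<lambda>_. B) integrable_on {0..t}" by (rule integrable_const_ivl)
    show "norm (f z * (1 - F (t - z))) \<le> B" if "z \<in> {0..t}" for z
    proof -
      have "\<bar>f z * (1 - F (t - z))\<bar> = \<bar>f z\<bar> * (1 - F (t - z))" using F1 by (simp add: abs_mult)
      also have "\<dots> \<le> \<bar>f z\<bar> * 1" using F0 by (intro mult_left_mono) auto
      moreover have "\<bar>f z\<bar> \<le> B" using assms(3) that by auto
      ultimately show ?thesis by simp
    qed
  qed
  then show ?thesis using assms(1) by (simp add: mult.commute)
qed

lemma Ig_diff: assumes "continuous_on {0..t} f" "\<forall>z\<in>{0..t}. \<bar>f z\<bar> \<le> B"
   "continuous_on {0..t} g" "\<forall>z\<in>{0..t}. \<bar>g z\<bar> \<le> B'"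
  shows "Ig f t - Ig g t = Ig (\<lambda>z. f z - g z) t"
  unfolding Ig_def
  using integral_diff[OF Ig_int[OF assms(1,2)] Ig_int[OF assms(3,4)]]
  by (simp add: algebra_simps)

lemma Ig_meas: assumes "0 < b" "continuous_on {0..b} f"
  shows "\<exists>L \<in> borel_measurable borel. \<forall>t\<in>{0..b}. Ig f t = L t"
proof -
  define G where "G z = f (max 0 (min z b))" for z
  have Gc: "continuous_on UNIV G" unfolding G_def
    by (rule continuous_on_compose2[OF assms(2)]) (use assms(1) in \<open>auto intro!: continuous_intros\<close>)
  have GB: "G \<in> borel_measurable borel" using Gc by (rule borel_measurable_continuous_onI)
  obtain B where B: "\<forall>z\<in>{0..b}. \<bar>f z\<bar> \<le> B"
    using compact_continuous_image[OF assms(2) compact_Icc] compact_imp_bounded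
    by (force simp: bounded_real)
  have GBd: "\<bar>G z\<bar> \<le> B" for z unfolding G_def using B assms(1) by auto
  define L where "L t = (\<integral>z. (if 0 \<le> z \<and> z \<le> t then G z * (1 - F (t - z)) else 0) \<partial>lborel)" for t
  have "(\<lambda>(t, z). if 0 \<le> z \<and> z \<le> t then G z * (1 - F (t - z)) else 0) \<in> borel_measurable (borel \<Otimes>\<^sub>M lborel)"
    using GB F_borel by measurable
  then have Lm: "L \<in> borel_measurable borel" unfolding L_def
    by (rule lborel.borel_measurable_lebesgue_integral)
  have "Ig f t = L t" if t: "t \<in> {0..b}" for t
  proof -
    have "Ig f t = integral {0..t} (\<lambda>z. G z * (1 - F (t - z)))"
      unfolding Ig_def G_def using t by (intro integral_cong) auto
    also have "\<dots> = set_lebesgue_integral lborel {0..t} (\<lambda>z. G z * (1 - F (t - z)))"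
    proof (rule set_borel_integral_eq_integral(2)[symmetric])
      show "set_integrable lborel {0..t} (\<lambda>z. G z * (1 - F (t - z)))"
        unfolding set_integrable_def
      proof (rule integrableI_bounded_set_indicator[where B=B])
        show "(\<lambda>z. G z * (1 - F (t - z))) \<in> borel_measurable lborel"
          using GB F_borel by measurable
        show "AE x\<in>{0..t} in lborel. norm (G x * (1 - F (t - x))) \<le> B"
        proof (rule AE_I2, rule impI)
          fix x
          have "\<bar>G x * (1 - F (t - x))\<bar> = \<bar>G x\<bar> * (1 - F (t - x))" using F1 by (simp add: abs_mult)
          also have "\<dots> \<le> \<bar>G x\<bar> * 1" using F0 by (intro mult_left_mono) auto
          finally show "norm (G x * (1 - F (t - x))) \<le> B" using GBd[of x] by simp
        qed
        show "emeasure lborel {0..t} < \<infinity>" using t by simp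
      qed auto
    qed
    also have "\<dots> = L t" unfolding L_def set_lebesgue_integral_def
      by (intro Bochner_Integration.integral_cong) (auto simp: indicator_def)
    finally show ?thesis .
  qed
  with Lm show ?thesis by blast
qed

end

context ie begin

definition ker :: "real \<Rightarrow> (real \<Rightarrow> real) \<Rightarrow> real \<Rightarrow> real" where
  "ker p f t = w t * (p * (1 - F t) + Ig f t)"

definition Psi :: "real \<Rightarrow> (real \<Rightarrow> real) \<Rightarrow> real \<Rightarrow> real" where
  "Psi p f u = \<mu> / W u * integral {0..u} (ker p f)"

lemma w_borel: "w \<in> borel_measurable borel"
proof -
  have l1: "(\<lambda>t::real. - \<alpha> / t) \<in> borel_measurable borel" by measurable
  have "(\<lambda>t::real. exp (- \<alpha> / t)) \<in> borel_measurable borel" using l1 by measurable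
  then show ?thesis unfolding w_def[abs_def] by (intro borel_measurable_times) measurable
qed

lemma sub_cont: "continuous_on {0..b::real} f \<Longrightarrow> t \<le> b \<Longrightarrow> continuous_on {0..t} f"
  by (erule continuous_on_subset) auto

lemma ker_int: assumes "0 < b" "continuous_on {0..b} f" "\<forall>z\<in>{0..b}. \<bar>f z\<bar> \<le> B"
  and u: "0 \<le> u" "u \<le> b"
  shows "ker p f integrable_on {0..u}"
proof (rule measurable_bounded_by_integrable_imp_integrable_real)
  obtain L where L: "L \<in> borel_measurable borel" "\<forall>t\<in>{0..b}. Ig f t = L t"
    using Ig_meas[OF assms(1,2)] by blast
  have "(\<lambda>t. w t * (p * (1 - F t) + L t)) \<in> borel_measurable borel"
    using w_borel F_borel L(1) by measurable
  then have "(\<lambda>t. w t * (p * (1 - F t) + L t)) \<in> borel_measurable (lebesgue_on {0..u})"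
    by (rule borel_lebon)
  moreover have "\<And>t. t \<in> {0..u} \<Longrightarrow> ker p f t = w t * (p * (1 - F t) + L t)"
    unfolding ker_def using L(2) u by auto
  ultimately show "ker p f \<in> borel_measurable (lebesgue_on {0..u})"
    using measurable_lebesgue_cong[of "{0..u}" "ker p f" "\<lambda>t. w t * (p * (1 - F t) + L t)"] by simp
  show "(\<lambda>t. w t * (\<bar>p\<bar> + B * b)) integrable_on {0..u}"
    using w_mult_int[of u "\<lambda>_. \<bar>p\<bar> + B * b"] u by simp
  have B0: "0 \<le> B" using assms(1,3) abs_ge_zero[of "f 0"] by force
  show "\<bar>ker p f t\<bar> \<le> w t * (\<bar>p\<bar> + B * b)" if t: "t \<in> {0..u}" for t
  proof -
    have Ib: "\<bar>Ig f t\<bar> \<le> B * t"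
      using Ig_bound[of t f B] sub_cont[OF assms(2), of t] assms(3) t u by auto
    have "\<bar>p * (1 - F t)\<bar> \<le> \<bar>p\<bar>" using F0[of t] F1[of t] by (simp add: abs_mult mult_left_le)
    moreover have "B * t \<le> B * b" using B0 t u by (intro mult_left_mono) auto
    ultimately have "\<bar>p * (1 - F t) + Ig f t\<bar> \<le> \<bar>p\<bar> + B * b" using Ib by linarith
    then show ?thesis unfolding ker_def using w_nonneg[of t] by (simp add: abs_mult mult_left_mono)
  qed
qed auto


lemma int_wc: "0 \<le> u \<Longrightarrow> integral {0..u} (\<lambda>t. w t * c) = c * integral {0..u} w"
  using integral_mult[OF w_int, of u c] by (simp add: mult.commute)

lemma Jw_nonneg: "0 \<le> u \<Longrightarrow> 0 \<le> integral {0..u} w"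
  by (rule integral_nonneg) (use w_int w_nonneg in auto)

lemma E1: assumes A: "0 < b" "continuous_on {0..b} f" "\<forall>z\<in>{0..b}. \<bar>f z\<bar> \<le> B"
    and p: "0 \<le> p" and u: "0 \<le> u" "u \<le> b"
  shows "\<bar>integral {0..u} (ker p f) - p * integral {0..u} w\<bar> \<le> (p * F u + B * u) * integral {0..u} w"
proof -
  have B0: "0 \<le> B" using A(1,3) abs_ge_zero[of "f 0"] by force
  have "integral {0..u} (ker p f) - p * integral {0..u} w = integral {0..u} (\<lambda>t. ker p f t - p * w t)"
    using integral_diff[OF ker_int[OF A u] integrable_on_mult_right[OF w_int[OF u(1)]]]
      integral_mult[OF w_int[OF u(1)], of p] by simp
  also have "\<bar>\<dots>\<bar> \<le> integral {0..u} (\<lambda>t. w t * (p * F u + B * u))"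
    unfolding real_norm_def[symmetric]
  proof (rule integral_norm_bound_integral)
    show "(\<lambda>t. ker p f t - p * w t) integrable_on {0..u}"
      using ker_int[OF A u] integrable_on_mult_right[OF w_int[OF u(1)]] by (rule integrable_diff)
    show "(\<lambda>t. w t * (p * F u + B * u)) integrable_on {0..u}"
      using w_mult_int[of u "\<lambda>_. p * F u + B * u"] u by simp
    show "norm (ker p f t - p * w t) \<le> w t * (p * F u + B * u)" if t: "t \<in> {0..u}" for t
    proof -
      have Ib: "\<bar>Ig f t\<bar> \<le> B * t"
        using Ig_bound[of t f B] sub_cont[OF A(2), of t] A(3) t u by auto
      have "F t \<le> F u" using Fmono t by (auto simp: mono_def)
      then have "p * F t \<le> p * F u" using p by (rule mult_left_mono)
      moreover have "B * t \<le> B * u" using B0 t by (intro mult_left_mono) auto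
      moreover have "0 \<le> p * F t" using p F0 by simp
      ultimately have "\<bar>Ig f t - p * F t\<bar> \<le> p * F u + B * u" using Ib by linarith
      then have "w t * \<bar>Ig f t - p * F t\<bar> \<le> w t * (p * F u + B * u)"
        using w_nonneg by (rule mult_left_mono)
      moreover have "ker p f t - p * w t = w t * (Ig f t - p * F t)"
        unfolding ker_def by (simp add: algebra_simps)
      ultimately show ?thesis using w_nonneg[of t] by (simp add: abs_mult)
    qed
  qed
  also have "\<dots> = (p * F u + B * u) * integral {0..u} w" using int_wc u by simp
  finally show ?thesis .
qed

lemma Psi_est: assumes A: "0 < b" "continuous_on {0..b} f" "\<forall>z\<in>{0..b}. \<bar>f z\<bar> \<le> B"
    and p: "0 \<le> p" and u: "0 < u" "u \<le> b" and b: "b \<le> u1"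
  shows "\<bar>Psi p f u - \<mu> * p / \<alpha>\<bar> \<le> 2 * \<mu> / \<alpha> * (p * F u + B * u) + 2 * \<mu> * p * \<bar>\<gamma>\<bar> * u / \<alpha>^2"
proof -
  define J where "J = integral {0..u} w"
  define T where "T = integral {0..u} (\<lambda>t. t * w t)"
  define I where "I = integral {0..u} (ker p f)"
  define Wu where "Wu = W u"
  have B0: "0 \<le> B" using A(1,3) abs_ge_zero[of "f 0"] by force
  have Wp: "0 < Wu" unfolding Wu_def using W_pos u by simp
  have id: "\<alpha> * J + \<gamma> * T = Wu" unfolding J_def T_def Wu_def using W_ident u by simp
  have T0: "0 \<le> T" unfolding T_def using Jt_nonneg u by simp
  have T1: "T \<le> 2 / \<alpha> * u * Wu" unfolding T_def Wu_def using Jt_le2 u b by simp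
  have J0: "0 \<le> J" unfolding J_def using Jw_nonneg u by simp
  have J1: "J \<le> 2 / \<alpha> * Wu" unfolding J_def Wu_def using Jw_le u b by simp
  have e1: "\<bar>I - p * J\<bar> \<le> (p * F u + B * u) * J" unfolding I_def J_def using E1[OF A p] u by simp
  have K0: "0 \<le> p * F u + B * u" using p F0[of u] B0 u by simp
  have eq: "Psi p f u - \<mu> * p / \<alpha> = \<mu> / Wu * (I - p * J) - \<mu> * p * \<gamma> * T / (\<alpha> * Wu)"
  proof -
    have "\<mu> / Wu * (I - p * J) - \<mu> * p * \<gamma> * T / (\<alpha> * Wu) = \<mu> / Wu * I - \<mu> * p * (\<alpha> * J + \<gamma> * T) / (\<alpha> * Wu)"
      using Wp apos by (simp add: field_simps)
    also have "\<dots> = \<mu> / Wu * I - \<mu> * p / \<alpha>" unfolding id using Wp apos by simp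
    finally show ?thesis unfolding Psi_def I_def Wu_def by simp
  qed
  have b1: "\<bar>\<mu> / Wu * (I - p * J)\<bar> \<le> 2 * \<mu> / \<alpha> * (p * F u + B * u)"
  proof -
    have "\<bar>\<mu> / Wu * (I - p * J)\<bar> = \<mu> / Wu * \<bar>I - p * J\<bar>" using mupos Wp by (simp add: abs_mult)
    also have "\<dots> \<le> \<mu> / Wu * ((p * F u + B * u) * J)" using e1 mupos Wp by (intro mult_left_mono) auto
    also have "\<dots> \<le> \<mu> / Wu * ((p * F u + B * u) * (2 / \<alpha> * Wu))"
      using J1 K0 mupos Wp by (intro mult_left_mono) auto
    also have "\<dots> = 2 * \<mu> / \<alpha> * (p * F u + B * u)" using Wp apos by (simp add: field_simps)
    finally show ?thesis .
  qed
  have b2: "\<bar>\<mu> * p * \<gamma> * T / (\<alpha> * Wu)\<bar> \<le> 2 * \<mu> * p * \<bar>\<gamma>\<bar> * u / \<alpha>^2"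
  proof -
    have "\<bar>\<mu> * p * \<gamma> * T / (\<alpha> * Wu)\<bar> = (\<mu> * p * \<bar>\<gamma>\<bar> / (\<alpha> * Wu)) * T"
      using mupos p T0 Wp apos by (simp add: abs_mult)
    also have "\<dots> \<le> (\<mu> * p * \<bar>\<gamma>\<bar> / (\<alpha> * Wu)) * (2 / \<alpha> * u * Wu)"
      using T1 mupos p Wp apos by (intro mult_left_mono) auto
    also have "\<dots> = 2 * \<mu> * p * \<bar>\<gamma>\<bar> * u / \<alpha>^2" using Wp apos by (simp add: field_simps power2_eq_square)
    finally show ?thesis .
  qed
  show ?thesis unfolding eq using b1 b2 by linarith
qed

lemma Psi_diff: assumes A: "0 < b" "continuous_on {0..b} f" "\<forall>z\<in>{0..b}. \<bar>f z\<bar> \<le> B"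
    and G: "continuous_on {0..b} g" "\<forall>z\<in>{0..b}. \<bar>g z\<bar> \<le> B'"
    and D: "\<forall>z\<in>{0..b}. \<bar>f z - g z\<bar> \<le> D"
    and u: "0 < u" "u \<le> b" and b: "b \<le> u1"
  shows "\<bar>Psi p f u - Psi p g u\<bar> \<le> 2 * \<mu> / \<alpha> * u * D"
proof -
  define Wu where "Wu = W u"
  have Wp: "0 < Wu" unfolding Wu_def using W_pos u by simp
  have D0: "0 \<le> D" using A(1) D abs_ge_zero[of "f 0 - g 0"] by force
  have u0: "0 \<le> u" using u by simp
  have kf: "ker p f integrable_on {0..u}" using ker_int[OF A u0 u(2)] .
  have kg: "ker p g integrable_on {0..u}" using ker_int[OF A(1) G u0 u(2)] .
  have d1: "integral {0..u} (ker p f) - integral {0..u} (ker p g) = integral {0..u} (\<lambda>t. ker p f t - ker p g t)"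
    using integral_diff[OF kf kg] by simp
  have d2: "\<bar>integral {0..u} (\<lambda>t. ker p f t - ker p g t)\<bar> \<le> integral {0..u} (\<lambda>t. D * (t * w t))"
    unfolding real_norm_def[symmetric]
  proof (rule integral_norm_bound_integral)
    show "(\<lambda>t. ker p f t - ker p g t) integrable_on {0..u}" using kf kg by (rule integrable_diff)
    show "(\<lambda>t. D * (t * w t)) integrable_on {0..u}" using integrable_on_mult_right[OF tw_int[OF u0]] .
    show "norm (ker p f t - ker p g t) \<le> D * (t * w t)" if t: "t \<in> {0..u}" for t
    proof -
      have ft: "continuous_on {0..t} f" "continuous_on {0..t} g" "continuous_on {0..t} (\<lambda>z. f z - g z)"
        using sub_cont[OF A(2), of t] sub_cont[OF G(1), of t] t u
        by (auto intro: continuous_on_diff)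
      have "ker p f t - ker p g t = w t * (Ig f t - Ig g t)" unfolding ker_def by (simp add: algebra_simps)
      also have "Ig f t - Ig g t = Ig (\<lambda>z. f z - g z) t"
        using Ig_diff[of t f B g B'] ft A(3) G(2) t u by auto
      finally have e: "ker p f t - ker p g t = w t * Ig (\<lambda>z. f z - g z) t" .
      have "\<bar>Ig (\<lambda>z. f z - g z) t\<bar> \<le> D * t"
        using Ig_bound[of t "\<lambda>z. f z - g z" D] ft(3) D t u by auto
      then have "w t * \<bar>Ig (\<lambda>z. f z - g z) t\<bar> \<le> w t * (D * t)" using w_nonneg by (rule mult_left_mono)
      then show ?thesis unfolding e using w_nonneg[of t] by (simp add: abs_mult algebra_simps)
    qed
  qed
  have d3: "integral {0..u} (\<lambda>t. D * (t * w t)) = D * integral {0..u} (\<lambda>t. t * w t)"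
    using integral_mult[OF tw_int[OF u0], of D] by (rule sym)
  have d4: "D * integral {0..u} (\<lambda>t. t * w t) \<le> D * (2 / \<alpha> * u * Wu)" unfolding Wu_def using Jt_le2[OF u0] u b D0
    by (intro mult_left_mono) auto
  have e2: "\<bar>integral {0..u} (ker p f) - integral {0..u} (ker p g)\<bar> \<le> D * (2 / \<alpha> * u * Wu)"
  proof -
    have "\<bar>integral {0..u} (ker p f) - integral {0..u} (ker p g)\<bar> = \<bar>integral {0..u} (\<lambda>t. ker p f t - ker p g t)\<bar>"
      by (simp only: d1)
    also have "\<dots> \<le> D * (2 / \<alpha> * u * Wu)" using d2 d3 d4 by linarith
    finally show ?thesis .
  qed
  have pe: "Psi p f u - Psi p g u = \<mu> / Wu * (integral {0..u} (ker p f) - integral {0..u} (ker p g))"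
    unfolding Psi_def Wu_def by (simp only: right_diff_distrib)
  have mw: "0 < \<mu> / Wu" using mupos Wp by simp
  have "\<bar>Psi p f u - Psi p g u\<bar> = \<bar>\<mu> / Wu * (integral {0..u} (ker p f) - integral {0..u} (ker p g))\<bar>"
    by (simp only: pe)
  also have "\<dots> = \<mu> / Wu * \<bar>integral {0..u} (ker p f) - integral {0..u} (ker p g)\<bar>"
    by (simp only: abs_mult abs_of_pos[OF mw])
  also have "\<dots> \<le> \<mu> / Wu * (D * (2 / \<alpha> * u * Wu))" using e2 mw by (intro mult_left_mono) auto
  also have "\<dots> = 2 * \<mu> / \<alpha> * u * D" using Wp by simp
  finally show ?thesis .
qed

lemma Psi_cont: assumes A: "0 < b" "continuous_on {0..b} f" "\<forall>z\<in>{0..b}. \<bar>f z\<bar> \<le> B"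
  shows "continuous_on {0<..b} (Psi p f)"
proof -
  have c1: "continuous_on {0<..b} (\<lambda>u. \<mu> / W u)"
  proof (rule continuous_on_divide)
    show "continuous_on {0<..b} W" using W_cont[OF A(1)] by (rule continuous_on_subset) auto
  qed (use W_pos in \<open>auto intro: continuous_on_const simp: less_imp_neq[symmetric]\<close>)
  have c2: "continuous_on {0<..b} (\<lambda>u. integral {0..u} (ker p f))"
  proof -
    have "continuous_on {0..b} (\<lambda>x. integral {0..x} (ker p f))"
      by (rule indefinite_integral_continuous_1[OF ker_int[OF A _ order.refl]]) (use A(1) in simp)
    then show ?thesis by (rule continuous_on_subset) auto
  qed
  show ?thesis unfolding Psi_def[abs_def] using c1 c2 by (rule continuous_on_mult)
qed

end

context ie begin

definition H :: "real \<Rightarrow> (real \<Rightarrow> real) \<Rightarrow> real \<Rightarrow> real" where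
  "H p f u = (if u = 0 then \<mu> * p / \<alpha> else Psi p f u)"

lemma Psi_lim: assumes A: "0 < b" "continuous_on {0..b} f" "\<forall>z\<in>{0..b}. \<bar>f z\<bar> \<le> B"
    and p: "0 \<le> p" and b: "b \<le> u1"
  shows "(Psi p f \<longlongrightarrow> \<mu> * p / \<alpha>) (at_right 0)"
proof -
  define E where "E u = 2 * \<mu> / \<alpha> * (p * F u + B * u) + 2 * \<mu> * p * \<bar>\<gamma>\<bar> * u / \<alpha>^2" for u
  have ev: "eventually (\<lambda>u. norm (Psi p f u - \<mu> * p / \<alpha>) \<le> E u) (at_right 0)"
    unfolding eventually_at_right_field
    by (rule exI[of _ b]) (use A p b Psi_est in \<open>auto simp: E_def\<close>)
  have "(E \<longlongrightarrow> 2 * \<mu> / \<alpha> * (p * 0 + B * 0) + 2 * \<mu> * p * \<bar>\<gamma>\<bar> * 0 / \<alpha>^2) (at_right 0)"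
    unfolding E_def[abs_def] using apos by (intro tendsto_intros Fright) auto
  then have "(E \<longlongrightarrow> 0) (at_right 0)" by simp
  with ev have "((\<lambda>u. Psi p f u - \<mu> * p / \<alpha>) \<longlongrightarrow> 0) (at_right 0)"
    by (rule Lim_null_comparison)
  then show ?thesis by (simp add: LIM_zero_iff)
qed

lemma H_cont: assumes A: "0 < b" "continuous_on {0..b} f" "\<forall>z\<in>{0..b}. \<bar>f z\<bar> \<le> B"
    and p: "0 \<le> p" and b: "b \<le> u1"
  shows "continuous_on {0..b} (H p f)"
proof -
  have c: "continuous_on {0<..b} (H p f)"
    using Psi_cont[OF A, of p] by (rule continuous_on_cong[THEN iffD1, rotated 2]) (auto simp: H_def)
  have "continuous (at x within {0..b}) (H p f)" if x: "x \<in> {0..b}" for x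
  proof (cases "x = 0")
    case True
    have "eventually (\<lambda>u. Psi p f u = H p f u) (at_right 0)"
      unfolding eventually_at_right_field by (rule exI[of _ 1]) (auto simp: H_def)
    with Psi_lim[OF A p b] have "(H p f \<longlongrightarrow> \<mu> * p / \<alpha>) (at_right 0)"
      by (rule Lim_transform_eventually)
    then show ?thesis using True A(1) by (simp add: continuous_within at_within_Icc_at_right H_def)
  next
    case False
    then have x0: "0 < x" using x by auto
    have "continuous (at x within {0<..b}) (H p f)"
    proof -
      have "x \<in> {0<..b}" using x x0 by auto
      then show ?thesis using c continuous_on_eq_continuous_within by blast
    qed
    moreover have "at x within {0..b} = at x within {0<..b}"
      by (rule at_within_nhd[of _ "{0<..}"]) (use x0 in auto)
    ultimately show ?thesis by simp
  qed
  then show ?thesis using continuous_on_eq_continuous_within by blast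
qed

end

context ie begin

lemma solves_iff: "solves_ie F \<gamma> \<alpha> \<mu> p u0 g \<longleftrightarrow>
   (\<forall>u\<in>{0<..u0}. ker p g integrable_on {0..u} \<and> g u = Psi p g u)"
  unfolding solves_ie_def ker_def[abs_def] Ig_def w_def Psi_def W_def ..

theorem main: assumes p: "0 < p"
  shows "\<exists>u0>0. \<exists>g. continuous_on {0..u0} g \<and> solves_ie F \<gamma> \<alpha> \<mu> p u0 g \<and>
           (\<forall>h. continuous_on {0..u0} h \<and> solves_ie F \<gamma> \<alpha> \<mu> p u0 h
                 \<longrightarrow> (\<forall>u\<in>{0..u0}. h u = g u)) \<and>
           g 0 = \<mu> * p / \<alpha>"
proof -
  have p0: "0 \<le> p" using p by simp
  define u0 where "u0 = min u1 (\<alpha> / (4 * \<mu>))"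
  have u0p: "0 < u0" using u1_pos apos mupos by (simp add: u0_def)
  have u0b: "u0 \<le> u1" by (simp add: u0_def)
  have u0c: "2 * \<mu> / \<alpha> * u0 \<le> 1 / 2"
  proof -
    have "u0 \<le> \<alpha> / (4 * \<mu>)" by (simp add: u0_def)
    then have "2 * \<mu> / \<alpha> * u0 \<le> 2 * \<mu> / \<alpha> * (\<alpha> / (4 * \<mu>))"
      using apos mupos by (intro mult_left_mono) auto
    also have "\<dots> = 1 / 2" using apos mupos by (simp add: field_simps)
    finally show ?thesis .
  qed
  define cl where "cl x = max 0 (min x u0)" for x
  have cl_cont: "continuous_on UNIV cl" unfolding cl_def[abs_def] by (intro continuous_intros)
  have cl_in: "cl x \<in> {0..u0}" for x unfolding cl_def using u0p by auto
  have cl_id: "x \<in> {0..u0} \<Longrightarrow> cl x = x" for x unfolding cl_def by auto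
  have bfc: "continuous_on {0..u0} (apply_bcontfun f)" for f :: "real \<Rightarrow>\<^sub>C real" by simp
  have bfb: "\<forall>z\<in>{0..u0}. \<bar>apply_bcontfun f z\<bar> \<le> norm f" for f :: "real \<Rightarrow>\<^sub>C real"
    using norm_bounded[of f] by simp
  have Hc: "continuous_on {0..u0} (H p (apply_bcontfun f))" for f :: "real \<Rightarrow>\<^sub>C real"
    using H_cont[OF u0p bfc bfb p0 u0b] .
  have inb: "(\<lambda>x. H p (apply_bcontfun f) (cl x)) \<in> bcontfun" for f :: "real \<Rightarrow>\<^sub>C real"
  proof -
    have "continuous_on UNIV (\<lambda>x. H p (apply_bcontfun f) (cl x))"
      using continuous_on_compose2[OF Hc[of f] cl_cont] cl_in by blast
    moreover have "bounded (range (\<lambda>x. H p (apply_bcontfun f) (cl x)))"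
    proof -
      have "bounded (H p (apply_bcontfun f) ` {0..u0})"
        using compact_continuous_image[OF Hc[of f] compact_Icc] by (rule compact_imp_bounded)
      moreover have "range (\<lambda>x. H p (apply_bcontfun f) (cl x)) \<subseteq> H p (apply_bcontfun f) ` {0..u0}"
        using cl_in by auto
      ultimately show ?thesis by (rule bounded_subset)
    qed
    ultimately show ?thesis unfolding bcontfun_def by blast
  qed
  define \<Phi> where "\<Phi> f = Bcontfun (\<lambda>x. H p (apply_bcontfun f) (cl x))" for f :: "real \<Rightarrow>\<^sub>C real"
  have \<Phi>app: "apply_bcontfun (\<Phi> f) x = H p (apply_bcontfun f) (cl x)" for f x
    unfolding \<Phi>_def using Bcontfun_inverse[OF inb[of f]] by simp
  have contr: "dist (\<Phi> f) (\<Phi> g) \<le> 1 / 2 * dist f g" for f g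
  proof (rule dist_bound)
    fix x
    have D0: "0 \<le> dist f g" by simp
    show "dist (apply_bcontfun (\<Phi> f) x) (apply_bcontfun (\<Phi> g) x) \<le> 1 / 2 * dist f g"
    proof (cases "cl x = 0")
      case True
      then show ?thesis unfolding \<Phi>app by (simp add: H_def)
    next
      case False
      then have cx: "0 < cl x" "cl x \<le> u0" using cl_in[of x] by auto
      have D: "\<forall>z\<in>{0..u0}. \<bar>apply_bcontfun f z - apply_bcontfun g z\<bar> \<le> dist f g"
        using dist_bounded[of f _ g] by (simp add: dist_real_def)
      have "\<bar>Psi p (apply_bcontfun f) (cl x) - Psi p (apply_bcontfun g) (cl x)\<bar> \<le> 2 * \<mu> / \<alpha> * cl x * dist f g"
        by (rule Psi_diff[OF u0p bfc bfb bfc bfb D cx u0b])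
      also have "\<dots> \<le> 2 * \<mu> / \<alpha> * u0 * dist f g"
        using cx apos mupos D0 by (intro mult_right_mono mult_left_mono) auto
      also have "\<dots> \<le> 1 / 2 * dist f g" using u0c D0 by (rule mult_right_mono)
      finally show ?thesis unfolding \<Phi>app dist_real_def using False by (simp add: H_def)
    qed
  qed
  obtain g0 where g0: "\<Phi> g0 = g0" using banach_fix_type[of "1/2" \<Phi>] contr by auto
  define g where "g = apply_bcontfun g0"
  have gH: "g x = H p g (cl x)" for x
    using \<Phi>app[of g0 x] g0 by (simp add: g_def)
  have gc: "continuous_on {0..u0} g" unfolding g_def by (rule bfc)
  have gB: "\<forall>z\<in>{0..u0}. \<bar>g z\<bar> \<le> norm g0" unfolding g_def by (rule bfb)
  have g_eq: "g u = Psi p g u" if "u \<in> {0<..u0}" for u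
    using gH[of u] cl_id[of u] that by (simp add: H_def)
  have gv0: "g 0 = \<mu> * p / \<alpha>" using gH[of 0] cl_id[of 0] u0p by (simp add: H_def)
  have sol: "solves_ie F \<gamma> \<alpha> \<mu> p u0 g"
    unfolding solves_iff using ker_int[OF u0p gc gB] g_eq by auto
  have uniq: "\<forall>u\<in>{0..u0}. h u = g u" if hc: "continuous_on {0..u0} h" and hs: "solves_ie F \<gamma> \<alpha> \<mu> p u0 h" for h
  proof -
    obtain Bh where Bh: "\<forall>z\<in>{0..u0}. \<bar>h z\<bar> \<le> Bh"
      using compact_continuous_image[OF hc compact_Icc] compact_imp_bounded
      by (force simp: bounded_real)
    have h_eq: "h u = Psi p h u" if "u \<in> {0<..u0}" for u using hs that unfolding solves_iff by auto
    have hv0: "h 0 = \<mu> * p / \<alpha>"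
    proof -
      have "continuous (at 0 within {0..u0}) h"
      proof -
        have "(0::real) \<in> {0..u0}" using u0p by simp
        then show ?thesis using hc continuous_on_eq_continuous_within by blast
      qed
      then have l1: "(h \<longlongrightarrow> h 0) (at_right 0)"
        using u0p by (simp add: continuous_within at_within_Icc_at_right)
      have "eventually (\<lambda>u. Psi p h u = h u) (at_right 0)"
        unfolding eventually_at_right_field by (rule exI[of _ u0]) (use u0p h_eq in auto)
      with Psi_lim[OF u0p hc Bh p0 u0b] have l2: "(h \<longlongrightarrow> \<mu> * p / \<alpha>) (at_right 0)"
        by (rule Lim_transform_eventually)
      show ?thesis using tendsto_unique[OF trivial_limit_at_right_real l1 l2] .
    qed
    have dc: "continuous_on {0..u0} (\<lambda>z. \<bar>h z - g z\<bar>)" using hc gc by (intro continuous_intros)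
    obtain z0 where z0: "z0 \<in> {0..u0}" "\<forall>y\<in>{0..u0}. \<bar>h y - g y\<bar> \<le> \<bar>h z0 - g z0\<bar>"
      using continuous_attains_sup[OF compact_Icc _ dc] u0p by auto
    define D where "D = \<bar>h z0 - g z0\<bar>"
    have D0: "0 \<le> D" unfolding D_def by simp
    have "D \<le> 0"
    proof (cases "z0 = 0")
      case True
      then show ?thesis unfolding D_def using hv0 gv0 by simp
    next
      case False
      then have zz: "0 < z0" "z0 \<le> u0" using z0 by auto
      have "D = \<bar>Psi p h z0 - Psi p g z0\<bar>" unfolding D_def using h_eq[of z0] g_eq[of z0] zz by simp
      also have "\<dots> \<le> 2 * \<mu> / \<alpha> * z0 * D"
        by (rule Psi_diff[OF u0p hc Bh gc gB _ zz u0b]) (use z0 in \<open>simp add: D_def\<close>)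
      also have "\<dots> \<le> 2 * \<mu> / \<alpha> * u0 * D"
        using zz apos mupos D0 by (intro mult_right_mono mult_left_mono) auto
      also have "\<dots> \<le> 1 / 2 * D" using u0c D0 by (rule mult_right_mono)
      finally show ?thesis by simp
    qed
    then have "D = 0" using D0 by simp
    then show ?thesis using z0 unfolding D_def by force
  qed
  show ?thesis using u0p gc sol uniq gv0 by blast
qed

end

theorem lemma1:
  fixes M :: "real measure" and F :: "real \<Rightarrow> real"
    and \<kappa> a r \<sigma> c lam \<gamma> \<alpha> \<mu> :: real
  assumes "real_distribution M" and "F = cdf M"
    and A1: "F 0 = 0"
    and "0 < \<kappa>" "\<kappa> \<le> 1" "0 \<le> r" "0 < \<sigma>" "0 < c" "0 < lam"
    and "\<gamma> = 2 * ((a - r) * \<kappa> + r) / (\<kappa>^2 * \<sigma>^2)"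
    and "\<alpha> = 2 * c / (\<kappa>^2 * \<sigma>^2)"
    and "\<mu> = 2 * lam / (\<kappa>^2 * \<sigma>^2)"
  shows "\<forall>p>0. \<exists>u0>0. \<exists>g.
           continuous_on {0..u0} g \<and> solves_ie F \<gamma> \<alpha> \<mu> p u0 g \<and>
           (\<forall>h. continuous_on {0..u0} h \<and> solves_ie F \<gamma> \<alpha> \<mu> p u0 h
                 \<longrightarrow> (\<forall>u\<in>{0..u0}. h u = g u)) \<and>
           g 0 = lam * p / c"
proof -
  have K: "0 < \<kappa>^2 * \<sigma>^2" using assms(4,7) by simp
  have ap: "0 < \<alpha>" using assms(8,11) K by simp
  have mp: "0 < \<mu>" using assms(9,12) K by simp
  have fbm: "finite_borel_measure M" using real_distribution.finite_borel_measure_M[OF assms(1)] .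
  interpret ie F \<gamma> \<alpha> \<mu>
  proof
    show "0 < \<alpha>" by (rule ap)
    show "0 < \<mu>" by (rule mp)
    show "mono F" unfolding mono_def assms(2) using finite_borel_measure.cdf_nondecreasing[OF fbm] by blast
    show "0 \<le> F x" for x unfolding assms(2) using finite_borel_measure.cdf_nonneg[OF fbm] by blast
    show "F x \<le> 1" for x unfolding assms(2) using real_distribution.cdf_bounded_prob[OF assms(1)] by blast
    have "continuous (at_right 0) F" unfolding assms(2) using finite_borel_measure.cdf_is_right_cont[OF fbm] .
    then show "(F \<longlongrightarrow> 0) (at_right 0)" using A1 by (simp add: continuous_within)
  qed
  have eq: "\<mu> * p / \<alpha> = lam * p / c" for p
    unfolding assms(11,12) using K assms(4,7,8) by (simp add: field_simps)
  show ?thesis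
  proof (intro allI impI)
    fix p :: real assume "0 < p"
    from main[OF this] show "\<exists>u0>0. \<exists>g.
           continuous_on {0..u0} g \<and> solves_ie F \<gamma> \<alpha> \<mu> p u0 g \<and>
           (\<forall>h. continuous_on {0..u0} h \<and> solves_ie F \<gamma> \<alpha> \<mu> p u0 h
                 \<longrightarrow> (\<forall>u\<in>{0..u0}. h u = g u)) \<and>
           g 0 = lam * p / c" by (simp only: eq)
  qed
qed

end
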